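(* Let $p\ge 3$ be an odd integer. Then the minimum number of copies of $B_p$ in a graph of order $p+2$ and size $\mathrm{ex}(p+2,B_p)+1$ is $3$, and the minimum number of copies of $B_p$ in a graph of order $p+3$ and size $\mathrm{ex}(p+3,B_p)+1$ is $3(p+1)$.
   Context: All graphs are finite and simple. The order of a graph is its number of vertices and its size is its number of edges. A copy of $H$ in $G$ is a subgraph of $G$ isomorphic to $H$; the number of copies of $H$ in $G$ is the number of distinct subgraphs of $G$ isomorphic to $H$. For a graph $H$ and a positive integer $n$, the Turán number $\mathrm{ex}(n,H)$ is the maximum size of a simple graph of order $n$ containing no copy of $H$. The book $B_p$ with $p$ pages is the graph consisting of $p$ triangles sharing a common edge (so $B_p$ has $p+2$ vertices and $2p+1$ edges). *)

theory Defs
  imports Main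
begin

definition simple_graph :: "'a set \<Rightarrow> 'a set set \<Rightarrow> bool" where
  "simple_graph V E \<longleftrightarrow> finite V \<and> E \<subseteq> {{u, v} | u v. u \<in> V \<and> v \<in> V \<and> u \<noteq> v}"

definition copies :: "'b set \<Rightarrow> 'b set set \<Rightarrow> 'a set \<Rightarrow> 'a set set \<Rightarrow> ('a set \<times> 'a set set) set" where
  "copies VH EH V E = {(W, F). W \<subseteq> V \<and> F \<subseteq> E \<and>
      (\<exists>f. bij_betw f VH W \<and> F = (\<lambda>e. f ` e) ` EH)}"

definition num_copies :: "'b set \<Rightarrow> 'b set set \<Rightarrow> 'a set \<Rightarrow> 'a set set \<Rightarrow> nat" where
  "num_copies VH EH V E = card (copies VH EH V E)"

definition turan_ex :: "nat \<Rightarrow> 'b set \<Rightarrow> 'b set set \<Rightarrow> nat" where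
  "turan_ex n VH EH = Max {card E | E. simple_graph {0..<n} E \<and> copies VH EH {0..<n} E = {}}"

definition min_copies :: "nat \<Rightarrow> nat \<Rightarrow> 'b set \<Rightarrow> 'b set set \<Rightarrow> nat" where
  "min_copies n m VH EH = Min {num_copies VH EH {0..<n} E | E. simple_graph {0..<n} E \<and> card E = m}"

text \<open>The book B_p: spine vertices 0 and 1, page vertices 2..p+1.\<close>
definition book_V :: "nat \<Rightarrow> nat set" where
  "book_V p = {0..<p+2}"

definition book_E :: "nat \<Rightarrow> nat set set" where
  "book_E p = insert {0, 1} (\<Union>i\<in>{2..<p+2}. {{0, i}, {1, i}})"

end

theory Submission imports Defs begin

definition AP :: "nat set \<Rightarrow> nat set set" where
  "AP V = {{u,v}|u v. u\<in>V \<and> v\<in>V \<and> u\<noteq>v}"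

definition PP :: "nat \<Rightarrow> nat set \<Rightarrow> nat set set \<Rightarrow> (nat set \<times> nat set) set" where
  "PP p V E = {(e,S). e \<in> E \<and> S \<subseteq> V - e \<and> card S = p \<and> (\<forall>s\<in>S. \<forall>u\<in>e. {u,s} \<in> E)}"

definition Phi :: "nat set \<times> nat set \<Rightarrow> nat set \<times> nat set set" where
  "Phi = (\<lambda>(e,S). (e \<union> S, insert e (\<Union>u\<in>e. \<Union>s\<in>S. {{u,s}})))"

lemma sg_AP: "simple_graph V E \<longleftrightarrow> finite V \<and> E \<subseteq> AP V"
  by (simp add: simple_graph_def AP_def)

lemma copies_sub:
  assumes "simple_graph V E" 
  shows "copies (book_V p) (book_E p) V E \<subseteq> Phi ` PP p V E"
proof
  fix x assume "x \<in> copies (book_V p) (book_E p) V E"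
  then obtain W F f where x: "x = (W,F)" and WV: "W \<subseteq> V" and FE: "F \<subseteq> E"
    and bij: "bij_betw f (book_V p) W" and F: "F = (\<lambda>e. f ` e) ` book_E p"
    unfolding copies_def by blast
  define S where "S = f ` {2..<p+2}"
  define e where "e = {f 0, f 1}"
  have inj: "inj_on f {0..<p+2}" using bij by (simp add: bij_betw_def book_V_def)
  have W: "W = f ` {0..<p+2}" using bij by (simp add: bij_betw_def book_V_def)
  have F2: "F = insert e (\<Union>u\<in>e. \<Union>s\<in>S. {{u,s}})"
  proof -
    have "F = insert e (\<Union>i\<in>{2..<p+2}. {{f 0, f i}, {f 1, f i}})"
      unfolding F book_E_def e_def by (simp add: image_UN)
    also have "(\<Union>i\<in>{2..<p+2}. {{f 0, f i}, {f 1, f i}}) = (\<Union>u\<in>e. \<Union>s\<in>S. {{u,s}})"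
      unfolding e_def S_def by auto
    finally show ?thesis .
  qed
  have eF: "e \<in> F" using F2 by auto
  have cS: "card S = p" unfolding S_def using inj
    by (subst card_image) (auto intro: inj_on_subset)
  have f01: "f 0 \<notin> S" "f 1 \<notin> S" 
  proof -
    have "f x \<noteq> f 0" "f x \<noteq> f 1" if "x \<in> {2..<p+2}" for x
      using inj_onD[OF inj, of x 0] inj_onD[OF inj, of x 1] that by auto
    then show "f 0 \<notin> S" "f 1 \<notin> S" unfolding S_def by force+
  qed
  have We: "W = e \<union> S" unfolding W e_def S_def
    by (auto simp: image_iff) (metis atLeastLessThan_iff less_2_cases_iff not_less)
  have "S \<subseteq> V - e" using We WV f01 e_def by auto
  moreover have "\<forall>s\<in>S. \<forall>u\<in>e. {u,s} \<in> E" using F2 FE by auto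
  ultimately have "(e,S) \<in> PP p V E" using eF FE cS by (auto simp: PP_def)
  moreover have "x = Phi (e,S)" using x We F2 by (simp add: Phi_def)
  ultimately show "x \<in> Phi ` PP p V E" by blast
qed

lemma copies_sup:
  assumes "simple_graph V E" 
  shows "Phi ` PP p V E \<subseteq> copies (book_V p) (book_E p) V E"
proof
  fix x assume "x \<in> Phi ` PP p V E"
  then obtain e S where x: "x = Phi (e,S)" and P: "(e,S) \<in> PP p V E" by auto
  have eE: "e \<in> E" and SV: "S \<subseteq> V - e" and cS: "card S = p"
    and adj: "\<forall>s\<in>S. \<forall>u\<in>e. {u,s} \<in> E" using P by (auto simp: PP_def)
  have fV: "finite V" and EAP: "E \<subseteq> AP V" using assms by (auto simp: sg_AP)
  then obtain u v where e: "e = {u,v}" and uv: "u \<in> V" "v \<in> V" "u \<noteq> v" 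
    using eE by (auto simp: AP_def)
  have fS: "finite S" using SV fV finite_subset by blast
  obtain g where g: "bij_betw g {2..<p+2} S"
    using finite_same_card_bij[of "{2..<p+2}" S] fS cS by auto
  define f where "f = (\<lambda>i. if i = 0 then u else if i = 1 then v else g i)"
  have uvS: "u \<notin> S" "v \<notin> S" using SV e by auto
  have "bij_betw f ({0,1} \<union> {2..<p+2}) ({u,v} \<union> S)"
  proof (rule bij_betw_combine)
    show "bij_betw f {0,1} {u,v}" using uv(3) by (auto simp: bij_betw_def f_def inj_on_def)
    show "bij_betw f {2..<p+2} S" using g by (rule bij_betw_cong[THEN iffD1, rotated]) (auto simp: f_def)
    show "{u,v} \<inter> S = {}" using uvS by auto
  qed
  moreover have "{0,1} \<union> {2..<p+2} = book_V p" by (auto simp: book_V_def)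
  ultimately have bij: "bij_betw f (book_V p) (e \<union> S)" using e by simp
  have gS: "g ` {2..<p+2} = S" using g by (simp add: bij_betw_def)
  have "(\<lambda>e. f ` e) ` book_E p = insert e (\<Union>i\<in>{2..<p+2}. {{u, g i}, {v, g i}})"
    unfolding book_E_def e by (auto simp: image_UN f_def)
  also have "(\<Union>i\<in>{2..<p+2}. {{u, g i}, {v, g i}}) = (\<Union>w\<in>e. \<Union>s\<in>S. {{w,s}})"
    unfolding e gS[symmetric] by auto
  finally have F: "(\<lambda>e. f ` e) ` book_E p = insert e (\<Union>w\<in>e. \<Union>s\<in>S. {{w,s}})" .
  have "e \<union> S \<subseteq> V" using SV e uv by auto
  moreover have "insert e (\<Union>w\<in>e. \<Union>s\<in>S. {{w,s}}) \<subseteq> E" using eE adj by auto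
  ultimately show "x \<in> copies (book_V p) (book_E p) V E"
    unfolding x Phi_def copies_def using bij F[symmetric] by (auto intro!: exI[of _ f])
qed

lemma spine:
  assumes "e \<inter> S = {}" "card S \<ge> 2" "card e = 2"
  shows "e = {x \<in> e \<union> S. \<forall>y\<in>(e \<union> S) - {x}. {x,y} \<in> insert e (\<Union>w\<in>e. \<Union>s\<in>S. {{w,s}})}"
    (is "e = ?R")
proof
  obtain u v where e: "e = {u,v}" "u \<noteq> v" using assms(3) by (auto simp: card_2_iff)
  show "e \<subseteq> ?R" using e by (auto simp: insert_commute)
  show "?R \<subseteq> e"
  proof
    fix x assume x: "x \<in> ?R"
    show "x \<in> e"
    proof (rule ccontr)
      assume "x \<notin> e"
      then have xS: "x \<in> S" using x by auto
      have "\<exists>t\<in>S. t \<noteq> x"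
      proof (rule ccontr)
        assume "\<not> ?thesis"
        then have "S \<subseteq> {x}" by auto
        then have "card S \<le> 1" using card_mono[of "{x}" S] by simp
        then show False using assms(2) by simp
      qed
      then obtain t where t: "t \<in> S" "t \<noteq> x" by auto
      then have "{x,t} \<in> insert e (\<Union>w\<in>e. \<Union>s\<in>S. {{w,s}})" using x by auto
      then show False using assms(1) xS t e by (auto simp: doubleton_eq_iff)
    qed
  qed
qed

lemma Phi_inj:
  assumes "E \<subseteq> AP V" "p \<ge> 2"
  shows "inj_on Phi (PP p V E)"
proof (rule inj_onI)
  fix a b assume a: "a \<in> PP p V E" and b: "b \<in> PP p V E" and ab: "Phi a = Phi b"
  obtain e S where a': "a = (e,S)" by (cases a)
  obtain e' S' where b': "b = (e',S')" by (cases b)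
  have c2: "card e = 2" "card e' = 2" using a b a' b' assms(1) by (auto simp: PP_def AP_def)
  have d: "e \<inter> S = {}" "e' \<inter> S' = {}" using a b a' b' by (auto simp: PP_def)
  have cs: "card S \<ge> 2" "card S' \<ge> 2" using a b a' b' assms(2) by (auto simp: PP_def)
  have W: "e \<union> S = e' \<union> S'" and F: "insert e (\<Union>w\<in>e. \<Union>s\<in>S. {{w,s}}) = insert e' (\<Union>w\<in>e'. \<Union>s\<in>S'. {{w,s}})"
    using ab a' b' by (auto simp: Phi_def)
  have "e = e'" using spine[OF d(1) cs(1) c2(1)] spine[OF d(2) cs(2) c2(2)] W F by simp
  moreover have "S = S'" using W d \<open>e = e'\<close> by blast
  ultimately show "a = b" using a' b' by simp
qed

lemma num_copies_PP:
  assumes "simple_graph V E" "p \<ge> 2"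
  shows "num_copies (book_V p) (book_E p) V E = card (PP p V E)"
proof -
  have "copies (book_V p) (book_E p) V E = Phi ` PP p V E"
    using copies_sub[OF assms(1)] copies_sup[OF assms(1)] by blast
  moreover have "inj_on Phi (PP p V E)" using Phi_inj assms by (auto simp: sg_AP)
  ultimately show ?thesis by (simp add: num_copies_def card_image)
qed

lemma copies_empty_PP:
  assumes "simple_graph V E"
  shows "copies (book_V p) (book_E p) V E = {} \<longleftrightarrow> PP p V E = {}"
  using copies_sub[OF assms(1)] copies_sup[OF assms(1)] by blast

lemma AP_eq: "AP V = {A. A \<subseteq> V \<and> card A = 2}"
  unfolding AP_def by (auto simp: card_2_iff)

lemma card_AP: "finite V \<Longrightarrow> card (AP V) = card V choose 2"
  by (simp add: AP_eq n_subsets)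

lemma finite_AP: "finite V \<Longrightarrow> finite (AP V)"
  by (simp add: AP_eq)

lemma AP_card2: "e \<in> AP V \<Longrightarrow> card e = 2"
  by (simp add: AP_eq)

lemma UM_sub: "\<Union>(AP V - E) \<subseteq> V"
  by (auto simp: AP_def)

lemma card_UM: "finite V \<Longrightarrow> card (\<Union>(AP V - E)) \<le> 2 * card (AP V - E)"
proof -
  assume "finite V"
  have "card (\<Union>(AP V - E)) \<le> sum card (AP V - E)" by (rule card_Union_le_sum_card)
  also have "sum card (AP V - E) = sum (\<lambda>_. 2) (AP V - E)"
    by (rule sum.cong) (auto simp: AP_eq)
  finally show ?thesis by simp
qed

lemma unc_E:
  assumes "a \<in> V" "x \<in> V" "a \<noteq> x" "a \<notin> \<Union>(AP V - E)"
  shows "{a,x} \<in> E"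
proof -
  have "{a,x} \<in> AP V" using assms by (auto simp: AP_def)
  then show ?thesis using assms(4) by blast
qed

lemma pair_PP:
  assumes "a \<in> V" "b \<in> V" "a \<noteq> b" "a \<notin> \<Union>(AP V - E)" "b \<notin> \<Union>(AP V - E)"
    "S \<subseteq> V - {a,b}" "card S = p"
  shows "({a,b},S) \<in> PP p V E"
proof -
  have 1: "{a,b} \<in> E" using unc_E[of a V b E] assms by simp
  have 2: "{u,s} \<in> E" if "s \<in> S" "u \<in> {a,b}" for s u
  proof -
    have "s \<in> V" "s \<noteq> a" "s \<noteq> b" using that assms(6) by auto
    then show ?thesis using that(2) unc_E[of a V s E] unc_E[of b V s E] assms by auto
  qed
  show ?thesis unfolding PP_def using 1 2 assms(6,7) by auto
qed

lemma finite_PP: "finite V \<Longrightarrow> E \<subseteq> AP V \<Longrightarrow> finite (PP p V E)"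
proof -
  assume fV: "finite V" "E \<subseteq> AP V"
  have "PP p V E \<subseteq> AP V \<times> Pow V" using fV(2) by (auto simp: PP_def)
  moreover have "finite (AP V \<times> Pow V)" using fV by (simp add: finite_AP)
  ultimately show ?thesis by (rule finite_subset)
qed

lemma three_elems:
  assumes "3 \<le> card U"
  obtains a b c where "a \<in> U" "b \<in> U" "c \<in> U" "a \<noteq> b" "a \<noteq> c" "b \<noteq> c"
proof -
  from assms obtain a B where "U = insert a B" "a \<notin> B" "2 \<le> card B" "finite B"
    using card_le_Suc_iff[of 2 U] by (auto simp: numeral_3_eq_3)
  moreover from \<open>2 \<le> card B\<close> obtain b C where "B = insert b C" "b \<notin> C" "1 \<le> card C" "finite C"
    using card_le_Suc_iff[of 1 B] by (auto simp: numeral_2_eq_2)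
  moreover from \<open>1 \<le> card C\<close> obtain c D where "C = insert c D"
    using card_le_Suc_iff[of 0 C] by auto
  ultimately show ?thesis using that by blast
qed

lemma unc_card:
  assumes "finite V"
  shows "card (V - \<Union>(AP V - E)) + 2 * card (AP V - E) \<ge> card V"
proof -
  have "card (V - \<Union>(AP V - E)) = card V - card (\<Union>(AP V - E))"
    using card_Diff_subset[OF finite_subset[OF UM_sub assms] UM_sub] .
  moreover have "card (\<Union>(AP V - E)) \<le> card V" using UM_sub assms card_mono by blast
  ultimately show ?thesis using card_UM[OF assms, of E] by linarith
qed

lemma part1_lower:
  assumes "finite V" "E \<subseteq> AP V" "card V = p + 2" "2 * card (AP V - E) + 3 \<le> card V"
  shows "3 \<le> card (PP p V E)"
proof -
  let ?U = "V - \<Union>(AP V - E)"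
  have "3 \<le> card ?U" using unc_card[OF assms(1), of E] assms(4) by linarith
  then obtain a b c where abc: "a \<in> ?U" "b \<in> ?U" "c \<in> ?U" "a \<noteq> b" "a \<noteq> c" "b \<noteq> c"
    by (rule three_elems)
  have cs: "card (V - {x,y}) = p" if "x \<in> V" "y \<in> V" "x \<noteq> y" for x y
    using that assms(1,3) by (simp add: card_Diff_subset)
  have U: "a \<in> V" "b \<in> V" "c \<in> V" "a \<notin> \<Union>(AP V - E)" "b \<notin> \<Union>(AP V - E)" "c \<notin> \<Union>(AP V - E)"
    using abc(1-3) by simp_all
  have "({a,b}, V-{a,b}) \<in> PP p V E" by (rule pair_PP) (use U abc cs in auto)
  moreover have "({a,c}, V-{a,c}) \<in> PP p V E" by (rule pair_PP) (use U abc cs in auto)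
  moreover have "({b,c}, V-{b,c}) \<in> PP p V E" by (rule pair_PP) (use U abc cs in auto)
  ultimately have sub: "{({a,b}, V-{a,b}), ({a,c}, V-{a,c}), ({b,c}, V-{b,c})} \<subseteq> PP p V E" by simp
  have d: "{a,b} \<noteq> {a,c}" "{a,b} \<noteq> {b,c}" "{a,c} \<noteq> {b,c}"
    using abc(4-6) by (simp_all add: doubleton_eq_iff)
  have "card {({a,b}, V-{a,b}), ({a,c}, V-{a,c}), ({b,c}, V-{b,c})} = 3"
    using d by simp
  then show ?thesis using card_mono[OF finite_PP[OF assms(1,2)] sub] by simp
qed

definition AS :: "nat \<Rightarrow> nat set \<Rightarrow> nat \<Rightarrow> nat \<Rightarrow> (nat set \<times> nat set) set" where
  "AS p V x y = (\<lambda>S. ({x,y},S)) ` {S. S \<subseteq> V - {x,y} \<and> card S = p}"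

lemma AS_card:
  assumes "finite V" "card V = p + 3" "x \<in> V" "y \<in> V" "x \<noteq> y"
  shows "card (AS p V x y) = p + 1"
proof -
  have "card (AS p V x y) = card {S. S \<subseteq> V - {x,y} \<and> card S = p}"
    unfolding AS_def by (rule card_image) (auto simp: inj_on_def)
  also have "\<dots> = card (V - {x,y}) choose p" using assms(1) by (simp add: n_subsets)
  also have "card (V - {x,y}) = Suc p" using assms by (simp add: card_Diff_subset)
  finally show ?thesis by (simp add: binomial_Suc_n)
qed

lemma AS_PP:
  assumes "a \<in> V" "b \<in> V" "a \<noteq> b" "a \<notin> \<Union>(AP V - E)" "b \<notin> \<Union>(AP V - E)"
  shows "AS p V a b \<subseteq> PP p V E"
  using pair_PP[OF assms] unfolding AS_def by auto

lemma count3: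
  assumes "finite P" "X \<subseteq> P" "Y \<subseteq> P" "Z \<subseteq> P" "X \<inter> Y = {}" "X \<inter> Z = {}" "Y \<inter> Z = {}"
    "card X = k" "card Y = k" "card Z = k"
  shows "3 * k \<le> card P"
proof -
  have f: "finite X" "finite Y" "finite Z" using assms finite_subset by blast+
  have "card (X \<union> Y \<union> Z) = 3 * k"
    using f assms(5-10) by (simp add: card_Un_disjoint Int_Un_distrib2)
  moreover have "card (X \<union> Y \<union> Z) \<le> card P" using assms(1-4) by (intro card_mono) auto
  ultimately show ?thesis by simp
qed

lemma overlap_card:
  assumes "finite V" "M \<subseteq> AP V" "m1 \<in> M" "m2 \<in> M" "m1 \<noteq> m2" "m1 \<inter> m2 \<noteq> {}"
  shows "card (\<Union>M) + 1 \<le> 2 * card M"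
proof -
  have fM: "finite M" using assms(1,2) finite_AP finite_subset by blast
  have c: "card m1 = 2" "card m2 = 2" using assms AP_card2 by blast+
  have fm: "finite m1" "finite m2" using c card_gt_0_iff by fastforce+
  have "card (m1 \<union> m2) \<le> 3"
  proof -
    have "card (m1 \<union> m2) + card (m1 \<inter> m2) = 4" using card_Un_Int[OF fm] c by simp
    moreover have "card (m1 \<inter> m2) \<ge> 1" using assms(6) fm by (simp add: Suc_le_eq card_gt_0_iff)
    ultimately show ?thesis by linarith
  qed
  have "\<Union>M = (m1 \<union> m2) \<union> \<Union>(M - {m1,m2})" using assms(3,4) by auto
  then have "card (\<Union>M) \<le> card (m1 \<union> m2) + card (\<Union>(M - {m1,m2}))"
    by (metis card_Un_le)
  also have "card (\<Union>(M - {m1,m2})) \<le> 2 * card (M - {m1,m2})"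
  proof -
    have "card (\<Union>(M - {m1,m2})) \<le> sum card (M - {m1,m2})" by (rule card_Union_le_sum_card)
    also have "sum card (M - {m1,m2}) = sum (\<lambda>_. 2) (M - {m1,m2})"
      by (rule sum.cong) (use assms(2) AP_card2 in auto)
    finally show ?thesis by simp
  qed
  also have "card (M - {m1,m2}) = card M - 2" using assms(3-5) fM by (simp add: card_Diff_subset)
  finally have *: "card (\<Union>M) \<le> card (m1 \<union> m2) + 2 * (card M - 2)" by simp
  have "card {m1,m2} \<le> card M" using assms(3,4) fM by (intro card_mono) auto
  then have "card M \<ge> 2" using assms(5) by simp
  then show ?thesis using * \<open>card (m1 \<union> m2) \<le> 3\<close> by linarith
qed

lemma part2_lower:
  assumes fV: "finite V" and EA: "E \<subseteq> AP V" and cV: "card V = p + 3" 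
    and cM: "2 * card (AP V - E) + 2 \<le> card V"
  shows "3 * (p + 1) \<le> card (PP p V E)"
proof -
  let ?M = "AP V - E"
  let ?U = "V - \<Union>?M"
  have fP: "finite (PP p V E)" using finite_PP[OF fV EA] .
  have cU: "2 \<le> card ?U" using unc_card[OF fV, of E] cM by linarith
  have csub: "\<Union>?M \<subseteq> V" by (rule UM_sub)
  have cU_eq: "card ?U = card V - card (\<Union>?M)"
    using card_Diff_subset[OF finite_subset[OF csub fV] csub] .
  have cUM: "card (\<Union>?M) \<le> card V" using csub fV card_mono by blast
  show ?thesis
  proof (cases "3 \<le> card ?U")
    case True
    then obtain a b c where abc: "a \<in> ?U" "b \<in> ?U" "c \<in> ?U" "a \<noteq> b" "a \<noteq> c" "b \<noteq> c"
      by (rule three_elems)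
    have U: "a \<in> V" "b \<in> V" "c \<in> V" "a \<notin> \<Union>?M" "b \<notin> \<Union>?M" "c \<notin> \<Union>?M"
      using abc(1-3) by simp_all
    have d: "{a,b} \<noteq> {a,c}" "{a,b} \<noteq> {b,c}" "{a,c} \<noteq> {b,c}"
      using abc(4-6) by (simp_all add: doubleton_eq_iff)
    show ?thesis
    proof (rule count3[OF fP])
      show "AS p V a b \<subseteq> PP p V E" by (rule AS_PP) (use U abc in auto)
      show "AS p V a c \<subseteq> PP p V E" by (rule AS_PP) (use U abc in auto)
      show "AS p V b c \<subseteq> PP p V E" by (rule AS_PP) (use U abc in auto)
      show "AS p V a b \<inter> AS p V a c = {}" using d by (auto simp: AS_def)
      show "AS p V a b \<inter> AS p V b c = {}" using d by (auto simp: AS_def)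
      show "AS p V a c \<inter> AS p V b c = {}" using d by (auto simp: AS_def)
      show "card (AS p V a b) = p + 1" by (rule AS_card) (use fV cV U abc in auto)
      show "card (AS p V a c) = p + 1" by (rule AS_card) (use fV cV U abc in auto)
      show "card (AS p V b c) = p + 1" by (rule AS_card) (use fV cV U abc in auto)
    qed
  next
    case False
    then have cU2: "card ?U = 2" using cU by simp
    then obtain a b where ab: "?U = {a,b}" "a \<noteq> b" by (auto simp: card_2_iff)
    have U: "a \<in> V" "b \<in> V" "a \<notin> \<Union>?M" "b \<notin> \<Union>?M" using ab by auto
    have cov: "x \<in> \<Union>?M" if "x \<in> V" "x \<noteq> a" "x \<noteq> b" for x
      using that ab(1) by blast
    have cUMe: "card (\<Union>?M) = 2 * card ?M"
      using cU_eq cU2 cUM cM card_UM[OF fV, of E] by linarith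
    have disj: "m1 = m2" if "m1 \<in> ?M" "m2 \<in> ?M" "m1 \<inter> m2 \<noteq> {}" for m1 m2
    proof (rule ccontr)
      assume "m1 \<noteq> m2"
      from overlap_card[OF fV _ that(1,2) this that(3)] cUMe show False by simp
    qed
    define pt where "pt = (\<lambda>x. SOME y. {x,y} \<in> ?M)"
    have pt: "{x, pt x} \<in> ?M" if xh: "x \<in> V" "x \<noteq> a" "x \<noteq> b" for x
    proof -
      obtain m where m: "m \<in> ?M" "x \<in> m" using cov[OF xh] by blast
      then obtain u v where "m = {u,v}" by (auto simp: AP_def)
      then have "\<exists>y. {x,y} \<in> ?M" using m by (auto simp: insert_commute)
      then show ?thesis unfolding pt_def by (rule someI_ex)
    qed
    have ptV: "pt x \<in> V" "pt x \<noteq> x" "pt x \<noteq> a" "pt x \<noteq> b" 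
      if "x \<in> V" "x \<noteq> a" "x \<noteq> b" for x
    proof -
      have m: "{x, pt x} \<in> AP V" using pt[OF that] by blast
      then show "pt x \<in> V" "pt x \<noteq> x" by (auto simp: AP_def doubleton_eq_iff)
      show "pt x \<noteq> a" "pt x \<noteq> b" using pt[OF that] U by blast+
    qed
    have xE: "{x,s} \<in> E" if "x \<in> V" "x \<noteq> a" "x \<noteq> b" "s \<in> V" "s \<noteq> x" "s \<noteq> pt x" for x s
    proof (rule ccontr)
      assume "{x,s} \<notin> E"
      moreover have "{x,s} \<in> AP V" using that by (auto simp: AP_def)
      ultimately have "{x,s} \<in> ?M" by blast
      from disj[OF this pt[OF that(1-3)]] have "{x,s} = {x, pt x}" by blast
      then show False using that(5,6) by (auto simp: doubleton_eq_iff)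
    qed
    define B where "B = (\<lambda>w. (\<lambda>x. ({w,x}, V - {w,x,pt x})) ` (V - {a,b}))"
    have BPP: "B w \<subseteq> PP p V E" if "w \<in> {a,b}" for w
    proof
      fix z assume "z \<in> B w"
      then obtain x where x: "x \<in> V" "x \<noteq> a" "x \<noteq> b" and z: "z = ({w,x}, V - {w,x,pt x})"
        unfolding B_def by auto
      have wV: "w \<in> V" "w \<notin> \<Union>?M" "w \<noteq> x" using that U x by auto
      have wE: "{w,y} \<in> E" if "y \<in> V" "y \<noteq> w" for y using unc_E[of w V y E] wV that by simp
      have "card (V - {w,x,pt x}) = p"
      proof -
        have "card {w,x,pt x} = 3" using ptV[OF x] wV that by auto
        then show ?thesis using card_Diff_subset[of "{w,x,pt x}" V] cV ptV[OF x] wV x by simp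
      qed
      moreover have "{w,x} \<in> E" using wE x wV by auto
      moreover have "\<forall>s\<in>V - {w,x,pt x}. \<forall>u\<in>{w,x}. {u,s} \<in> E"
        using wE xE[OF x] by (auto simp: insert_commute)
      ultimately show "z \<in> PP p V E" unfolding z PP_def by auto
    qed
    have Bcard: "card (B w) = p + 1" if "w \<in> {a,b}" for w
    proof -
      have "inj_on (\<lambda>x. ({w,x}, V - {w,x,pt x})) (V - {a,b})"
        using that by (auto simp: inj_on_def doubleton_eq_iff)
      then have "card (B w) = card (V - {a,b})" unfolding B_def by (rule card_image)
      also have "\<dots> = p + 1" using cV U ab(2) fV by (simp add: card_Diff_subset)
      finally show ?thesis .
    qed
    show ?thesis
    proof (rule count3[OF fP])
      show "AS p V a b \<subseteq> PP p V E" by (rule AS_PP) (use U ab in auto)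
      show "B a \<subseteq> PP p V E" "B b \<subseteq> PP p V E" using BPP by auto
      show "AS p V a b \<inter> B a = {}" by (auto simp: AS_def B_def doubleton_eq_iff)
      show "AS p V a b \<inter> B b = {}" by (auto simp: AS_def B_def doubleton_eq_iff)
      show "B a \<inter> B b = {}" using ab(2) by (auto simp: B_def doubleton_eq_iff)
      show "card (AS p V a b) = p + 1" by (rule AS_card) (use fV cV U ab in auto)
      show "card (B a) = p + 1" "card (B b) = p + 1" using Bcard by auto
    qed
  qed
qed

lemma spine_unc1:
  assumes fV: "finite V" and cV: "card V = p + 2" and EA: "E \<subseteq> AP V" and P: "(e,S) \<in> PP p V E"
    and u: "u \<in> e"
  shows "u \<notin> \<Union>(AP V - E)" and "S = V - e"
proof -
  have eE: "e \<in> E" and SV: "S \<subseteq> V - e" and cS: "card S = p" and adj: "\<forall>s\<in>S. \<forall>w\<in>e. {w,s} \<in> E"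
    using P by (auto simp: PP_def)
  have eAP: "e \<in> AP V" using eE EA by blast
  then have eV: "e \<subseteq> V" and ce: "card e = 2" by (auto simp: AP_eq)
  have "card (V - e) = p" using card_Diff_subset[OF finite_subset[OF eV fV] eV] cV ce by simp
  then show SVe: "S = V - e" using card_subset_eq[of "V - e" S] SV cS fV by simp
  show "u \<notin> \<Union>(AP V - E)"
  proof
    assume "u \<in> \<Union>(AP V - E)"
    then obtain m where m: "m \<in> AP V" "m \<notin> E" "u \<in> m" by auto
    then obtain y where my: "m = {u,y}" "y \<in> V" "y \<noteq> u" by (auto simp: AP_def doubleton_eq_iff)
    show False
    proof (cases "y \<in> e")
      case True
      obtain a b where ab: "e = {a,b}" "a \<noteq> b" using ce by (auto simp: card_2_iff)
      have "e = {u,y}" using True u ab my(3) by auto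
      then show False using m my eE by simp
    next
      case False
      then have "y \<in> S" using SVe my by auto
      then have "{u,y} \<in> E" using adj u by (auto simp: insert_commute)
      then show False using m my by simp
    qed
  qed
qed

definition mat1 :: "nat \<Rightarrow> nat set set" where
  "mat1 k = (\<lambda>i. {2*i+1, 2*i+2}) ` {..<k}"

lemma mat1_sub: "2 * k \<le> p + 1 \<Longrightarrow> mat1 k \<subseteq> AP {0..<p+2}"
proof
  fix m assume k: "2 * k \<le> p + 1" and "m \<in> mat1 k"
  then obtain i where i: "i < k" "m = {2*i+1, 2*i+2}" by (auto simp: mat1_def)
  then have "2*i+1 \<in> {0..<p+2} \<and> 2*i+2 \<in> {0..<p+2} \<and> 2*i+1 \<noteq> 2*i+2" using k by auto
  then show "m \<in> AP {0..<p+2}" unfolding AP_def i(2) by blast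
qed

lemma mat1_card: "card (mat1 k) = k"
proof -
  have "inj_on (\<lambda>i::nat. {2*i+1, 2*i+2}) {..<k}"
    by (auto simp: inj_on_def doubleton_eq_iff)
  then show ?thesis unfolding mat1_def by (simp add: card_image)
qed

lemma mat1_cov: "1 \<le> x \<Longrightarrow> x \<le> 2 * k \<Longrightarrow> x \<in> \<Union>(mat1 k)"
proof -
  assume x: "1 \<le> x" "x \<le> 2 * k"
  define i where "i = (x - 1) div 2"
  have "i < k" using x unfolding i_def by linarith
  moreover have "x = 2*i+1 \<or> x = 2*i+2" unfolding i_def using x by linarith
  ultimately show ?thesis unfolding mat1_def by blast
qed

lemma AP_diff_diff: "M \<subseteq> AP V \<Longrightarrow> AP V - (AP V - M) = M" by blast

lemma constr1_free:
  assumes "2 * k = p + 1" 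
  shows "PP p {0..<p+2} (AP {0..<p+2} - mat1 k) = {}"
proof (rule ccontr)
  let ?V = "{0..<p+2}" and ?E = "AP {0..<p+2} - mat1 k"
  assume "PP p ?V ?E \<noteq> {}"
  then obtain e S where P: "(e,S) \<in> PP p ?V ?E" by auto
  have MM: "AP ?V - ?E = mat1 k" using mat1_sub[of k p] assms by (intro AP_diff_diff) simp
  have ee: "e \<in> AP ?V" using P by (auto simp: PP_def)
  then obtain a b where ab: "e = {a,b}" "a \<noteq> b" "a \<in> ?V" "b \<in> ?V" by (auto simp: AP_def)
  have "a \<notin> \<Union>(mat1 k)" "b \<notin> \<Union>(mat1 k)"
    using spine_unc1(1)[OF _ _ _ P, of a] spine_unc1(1)[OF _ _ _ P, of b] MM ab by auto
  then have "a = 0" "b = 0" using mat1_cov[of a k] mat1_cov[of b k] ab assms by fastforce+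
  then show False using ab by simp
qed

lemma constr1_min:
  assumes "2 * k + 1 = p" "p \<ge> 2"
  shows "card (PP p {0..<p+2} (AP {0..<p+2} - mat1 k)) \<le> 3"
proof -
  let ?V = "{0..<p+2}" and ?E = "AP {0..<p+2} - mat1 k"
  have MM: "AP ?V - ?E = mat1 k" using mat1_sub[of k p] assms by (intro AP_diff_diff) simp
  have "PP p ?V ?E \<subseteq> (\<lambda>e. (e, ?V - e)) ` {e. e \<subseteq> {0,p,p+1} \<and> card e = 2}"
  proof
    fix z assume z: "z \<in> PP p ?V ?E"
    obtain e S where zz: "z = (e,S)" by (cases z)
    have P: "(e,S) \<in> PP p ?V ?E" using z zz by simp
    have ee: "e \<in> AP ?V" using P by (auto simp: PP_def)
    then have ce: "card e = 2" and eV: "e \<subseteq> ?V" by (auto simp: AP_eq)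
    have "e \<subseteq> {0,p,p+1}"
    proof
      fix u assume u: "u \<in> e"
      have "u \<notin> \<Union>(mat1 k)" using spine_unc1(1)[OF _ _ _ P u] MM by auto
      then show "u \<in> {0,p,p+1}" using mat1_cov[of u k] u eV assms by fastforce
    qed
    moreover have "S = ?V - e" using spine_unc1(2)[OF _ _ _ P] ce by fastforce
    ultimately show "z \<in> (\<lambda>e. (e, ?V - e)) ` {e. e \<subseteq> {0,p,p+1} \<and> card e = 2}"
      using zz ce by auto
  qed
  then have "card (PP p ?V ?E) \<le> card ((\<lambda>e. (e, ?V - e)) ` {e. e \<subseteq> {0,p,p+1} \<and> card e = 2})"
    by (intro card_mono) auto
  also have "\<dots> \<le> card {e. e \<subseteq> {0,p,p+1} \<and> card e = 2}" by (rule card_image_le) simp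
  also have "\<dots> = card {0,p,p+1} choose 2" by (simp add: n_subsets)
  also have "card {0,p,p+1} = 3" using assms by simp
  also have "(3::nat) choose 2 = 3" by (simp add: choose_two)
  finally show ?thesis .
qed

lemma spine2:
  assumes EA: "E \<subseteq> AP V" and P: "(e,S) \<in> PP p V E" and u: "u \<in> e"
    and m: "{u,y} \<notin> E" and yu: "y \<noteq> u"
  shows "y \<notin> e" "y \<notin> S"
proof -
  have eE: "e \<in> E" and adj: "\<forall>s\<in>S. \<forall>w\<in>e. {w,s} \<in> E"
    using P by (auto simp: PP_def)
  have ce: "card e = 2" using eE EA by (auto simp: AP_eq)
  show "y \<notin> e"
  proof
    assume y: "y \<in> e"
    obtain a b where ab: "e = {a,b}" "a \<noteq> b" using ce by (auto simp: card_2_iff)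
    have "e = {u,y}" using y u ab yu by auto
    then show False using m eE by simp
  qed
  show "y \<notin> S" using adj u m by (auto simp: insert_commute)
qed

definition pt :: "nat \<Rightarrow> nat" where "pt x = (if even x then x + 1 else x - 1)"

definition mat2 :: "nat \<Rightarrow> nat set set" where
  "mat2 k = (\<lambda>i. {2*i, 2*i+1}) ` {..<k}"

lemma mat2_sub: "2 * k \<le> p + 3 \<Longrightarrow> mat2 k \<subseteq> AP {0..<p+3}"
proof
  fix m assume k: "2 * k \<le> p + 3" and "m \<in> mat2 k"
  then obtain i where i: "i < k" "m = {2*i, 2*i+1}" by (auto simp: mat2_def)
  then have "2*i \<in> {0..<p+3} \<and> 2*i+1 \<in> {0..<p+3} \<and> 2*i \<noteq> 2*i+1" using k by auto
  then show "m \<in> AP {0..<p+3}" unfolding AP_def i(2) by blast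
qed

lemma mat2_card: "card (mat2 k) = k"
proof -
  have "inj_on (\<lambda>i::nat. {2*i, 2*i+1}) {..<k}"
    by (auto simp: inj_on_def doubleton_eq_iff)
  then show ?thesis unfolding mat2_def by (simp add: card_image)
qed

lemma mat2_cov: "x < 2 * k \<Longrightarrow> {x, pt x} \<in> mat2 k"
proof -
  assume x: "x < 2 * k"
  define i where "i = x div 2"
  have "i < k" using x unfolding i_def by linarith
  moreover have "{x, pt x} = {2*i, 2*i+1}" unfolding i_def pt_def
    by (cases "even x") (auto elim!: evenE oddE)
  ultimately show ?thesis unfolding mat2_def by blast
qed

lemma mat2_unc: "x \<in> \<Union>(mat2 k) \<Longrightarrow> x < 2 * k"
  by (auto simp: mat2_def)

lemma pt_props: "pt x \<noteq> x" "pt (pt x) = x" "x < 2 * k \<Longrightarrow> pt x < 2 * k"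
  unfolding pt_def by (auto elim!: evenE oddE)

lemma pt_inj: "pt x = pt y \<Longrightarrow> x = y"
  by (metis pt_props(2))

lemma two_cov:
  assumes cV: "card V = p + 3" and fV: "finite V" and EA: "E \<subseteq> AP V" and P: "(e,S) \<in> PP p V E"
    and uv: "u \<in> e" "v \<in> e" "u \<noteq> v"
    and mu: "{u, pt u} \<notin> E" and mv: "{v, pt v} \<notin> E"
    and pV: "pt u \<in> V" "pt v \<in> V"
  shows False
proof -
  have SV: "S \<subseteq> V - e" and cS: "card S = p" using P by (auto simp: PP_def)
  have eV: "e \<subseteq> V" using P EA by (auto simp: PP_def AP_eq)
  have a: "pt u \<notin> e" "pt u \<notin> S" using spine2[OF EA P uv(1) mu pt_props(1)] by auto
  have b: "pt v \<notin> e" "pt v \<notin> S" using spine2[OF EA P uv(2) mv pt_props(1)] by auto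
  have ne: "pt u \<noteq> pt v" using uv(3) pt_inj by blast
  have sub: "S \<subseteq> V - {u, v, pt u, pt v}" using SV a b uv by auto
  have dd: "pt u \<noteq> u" "pt u \<noteq> v" "pt v \<noteq> u" "pt v \<noteq> v" using a b uv by auto
  have c4: "card {u, v, pt u, pt v} = 4" using uv(3) dd ne by simp
  have "card (V - {u, v, pt u, pt v}) = p - 1"
    using card_Diff_subset[of "{u, v, pt u, pt v}" V] c4 cV uv eV pV by auto
  moreover have "card S \<le> card (V - {u, v, pt u, pt v})" using sub fV by (intro card_mono) auto
  moreover have "card {u, v, pt u, pt v} \<le> card V" using fV uv eV pV by (intro card_mono) auto
  ultimately show False using cS c4 cV by linarith
qed

lemma constr2_free:
  assumes "2 * k = p + 3"
  shows "PP p {0..<p+3} (AP {0..<p+3} - mat2 k) = {}"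
proof (rule ccontr)
  let ?V = "{0..<p+3}" and ?E = "AP {0..<p+3} - mat2 k"
  assume "PP p ?V ?E \<noteq> {}"
  then obtain e S where P: "(e,S) \<in> PP p ?V ?E" by auto
  have EA: "?E \<subseteq> AP ?V" by blast
  have ee: "e \<in> AP ?V" using P by (auto simp: PP_def)
  then obtain u v where ab: "e = {u,v}" "u \<noteq> v" "u \<in> ?V" "v \<in> ?V" by (auto simp: AP_def)
  have cov: "{x, pt x} \<notin> ?E" "pt x \<in> ?V" if "x \<in> ?V" for x
    using mat2_cov[of x k] pt_props(3)[of x k] that assms by auto
  show False
    by (rule two_cov[OF _ _ EA P, of u v]) (use ab cov in auto)
qed

lemma constr2_min:
  assumes "2 * k = p + 1"
  shows "card (PP p {0..<p+3} (AP {0..<p+3} - mat2 k)) \<le> 3 * (p + 1)"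
proof -
  let ?V = "{0..<p+3}" and ?E = "AP {0..<p+3} - mat2 k"
  let ?a = "p+1" and ?b = "p+2"
  have EA: "?E \<subseteq> AP ?V" by blast
  have MM: "AP ?V - ?E = mat2 k" using mat2_sub[of k p] assms by (intro AP_diff_diff) simp
  have cov: "{x, pt x} \<notin> ?E" "pt x \<in> ?V" if "x < 2 * k" for x
    using mat2_cov[of x k] pt_props(3)[of x k] that assms by auto
  define B where "B = (\<lambda>(w,x). ({w,x}, ?V - {w,x,pt x})) ` ({?a,?b} \<times> {..<2*k})"
  have "PP p ?V ?E \<subseteq> AS p ?V ?a ?b \<union> B"
  proof
    fix z assume z: "z \<in> PP p ?V ?E"
    obtain e S where zz: "z = (e,S)" by (cases z)
    have P: "(e,S) \<in> PP p ?V ?E" using z zz by simp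
    have SV: "S \<subseteq> ?V - e" and cS: "card S = p" using P by (auto simp: PP_def)
    have ee: "e \<in> AP ?V" using P by (auto simp: PP_def)
    then obtain u v where ab: "e = {u,v}" "u \<noteq> v" "u \<in> ?V" "v \<in> ?V" by (auto simp: AP_def)
    have cut: "y < 2 * k \<or> y = ?a \<or> y = ?b" if "y \<in> ?V" for y using that assms by auto
    have one: "z \<in> B" if w: "w \<in> {?a, ?b}" and x: "x < 2 * k" and exw: "e = {w,x}" for w x
    proof -
      have xe: "x \<in> e" using exw by simp
      have "pt x \<notin> S" using spine2[OF EA P xe cov(1)[OF x] pt_props(1)] by simp
      then have sub: "S \<subseteq> ?V - {w,x,pt x}" using SV exw by auto
      have wx: "w \<noteq> x" "w \<noteq> pt x" using w x pt_props(3)[of x k] assms by auto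
      have c3: "card {w,x,pt x} = 3" using wx pt_props(1)[of x] by simp
      have "card (?V - {w,x,pt x}) = p"
        using card_Diff_subset[of "{w,x,pt x}" ?V] c3 cov(2)[OF x] x w assms by auto
      then have "S = ?V - {w,x,pt x}" using card_subset_eq[of "?V - {w,x,pt x}" S] sub cS by simp
      moreover have "(w,x) \<in> {?a,?b} \<times> {..<2*k}" using w x by simp
      ultimately show ?thesis unfolding B_def zz exw by (auto intro: image_eqI[of _ _ "(w,x)"])
    qed
    show "z \<in> AS p ?V ?a ?b \<union> B"
    proof (cases "u < 2 * k")
      case uT: True
      show ?thesis
      proof (cases "v < 2 * k")
        case True
        have False by (rule two_cov[OF _ _ EA P, of u v]) (use ab cov uT True in auto)
        then show ?thesis ..
      next
        case False
        then have "v \<in> {?a,?b}" using cut[OF ab(4)] by auto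
        then show ?thesis using one[of v u] uT ab by (auto simp: insert_commute)
      qed
    next
      case uF: False
      then have ua: "u \<in> {?a,?b}" using cut[OF ab(3)] by auto
      show ?thesis
      proof (cases "v < 2 * k")
        case True
        then show ?thesis using one[of u v] ua ab by auto
      next
        case False
        then have "v \<in> {?a,?b}" using cut[OF ab(4)] by auto
        then have "e = {?a,?b}" using ua ab by auto
        then show ?thesis using SV cS unfolding zz AS_def by auto
      qed
    qed
  qed
  then have "card (PP p ?V ?E) \<le> card (AS p ?V ?a ?b \<union> B)"
    by (intro card_mono) (auto simp: AS_def B_def)
  also have "\<dots> \<le> card (AS p ?V ?a ?b) + card B" by (rule card_Un_le)
  also have "card (AS p ?V ?a ?b) = p + 1" by (rule AS_card) auto
  also have "card B \<le> card ({?a,?b} \<times> {..<2*k})" unfolding B_def by (rule card_image_le) simp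
  also have "card ({?a,?b} \<times> {..<2*k}) = 2 * (p + 1)" using assms by (simp add: card_cartesian_product)
  finally show ?thesis by simp
qed

lemma turan_val:
  assumes up: "\<And>E. E \<subseteq> AP {0..<n} \<Longrightarrow> PP p {0..<n} E = {} \<Longrightarrow> card E \<le> T"
    and E0: "E0 \<subseteq> AP {0..<n}" "PP p {0..<n} E0 = {}" "card E0 = T"
  shows "turan_ex n (book_V p) (book_E p) = T"
  unfolding turan_ex_def
proof (rule Max_eqI)
  let ?Q = "{card E |E. simple_graph {0..<n} E \<and> copies (book_V p) (book_E p) {0..<n} E = {}}"
  show "finite ?Q"
  proof (rule finite_subset)
    show "?Q \<subseteq> {..T}" using up by (auto simp: sg_AP copies_empty_PP)
  qed simp
  show "y \<le> T" if "y \<in> ?Q" for y using that up by (auto simp: sg_AP copies_empty_PP)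
  show "T \<in> ?Q" using E0 copies_empty_PP[of "{0..<n}" E0 p] by (auto simp: sg_AP)
qed

lemma min_val:
  assumes p2: "p \<ge> 2"
    and low: "\<And>E. E \<subseteq> AP {0..<n} \<Longrightarrow> card E = m \<Longrightarrow> c \<le> card (PP p {0..<n} E)"
    and E1: "E1 \<subseteq> AP {0..<n}" "card E1 = m" "card (PP p {0..<n} E1) \<le> c"
  shows "min_copies n m (book_V p) (book_E p) = c"
  unfolding min_copies_def
proof (rule Min_eqI)
  let ?R = "{num_copies (book_V p) (book_E p) {0..<n} E |E. simple_graph {0..<n} E \<and> card E = m}"
  have R: "?R = (\<lambda>E. card (PP p {0..<n} E)) ` {E. E \<subseteq> AP {0..<n} \<and> card E = m}"
  proof -
    have eq: "num_copies (book_V p) (book_E p) {0..<n} E = card (PP p {0..<n} E)"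
      if "E \<in> {E. E \<subseteq> AP {0..<n} \<and> card E = m}" for E
      using num_copies_PP[OF _ p2, of "{0..<n}" E] that by (simp add: sg_AP)
    have "?R = (\<lambda>E. num_copies (book_V p) (book_E p) {0..<n} E) ` {E. E \<subseteq> AP {0..<n} \<and> card E = m}"
      by (simp add: setcompr_eq_image sg_AP)
    also have "\<dots> = (\<lambda>E. card (PP p {0..<n} E)) ` {E. E \<subseteq> AP {0..<n} \<and> card E = m}"
      by (rule image_cong) (use eq in auto)
    finally show ?thesis .
  qed
  show "finite ?R" unfolding R
    by (rule finite_imageI, rule finite_subset[of _ "Pow (AP {0..<n})"]) (auto simp: finite_AP)
  show "c \<le> y" if "y \<in> ?R" for y using that low unfolding R by auto
  have "card (PP p {0..<n} E1) = c" using low[OF E1(1,2)] E1(3) by simp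
  then show "c \<in> ?R" unfolding R using E1 by auto
qed

lemma cardE: "finite V \<Longrightarrow> E \<subseteq> AP V \<Longrightarrow> card E = card (AP V) - card (AP V - E)"
  by (metis AP_diff_diff Diff_subset card_Diff_subset finite_AP finite_subset)

lemma cardE': "finite V \<Longrightarrow> E \<subseteq> AP V \<Longrightarrow> card E + card (AP V - E) = card (AP V)"
  by (metis card_Diff_subset card_mono diff_add finite_AP finite_subset le_add_diff_inverse2 add.commute)

theorem theorem4:
  fixes p :: nat
  assumes "p \<ge> 3" and "odd p"
  shows "min_copies (p+2) (turan_ex (p+2) (book_V p) (book_E p) + 1) (book_V p) (book_E p) = 3
       \<and> min_copies (p+3) (turan_ex (p+3) (book_V p) (book_E p) + 1) (book_V p) (book_E p) = 3 * (p+1)"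
proof -
  obtain q where q: "p = 2 * q + 1" using assms(2) oddE by blast
  have p2: "p \<ge> 2" using assms by simp
  let ?V1 = "{0..<p+2}" and ?V2 = "{0..<p+3}"
  have fin: "finite ?V1" "finite ?V2" by simp_all
  let ?N1 = "card (AP ?V1)" and ?N2 = "card (AP ?V2)"
  have m1a: "mat1 (q+1) \<subseteq> AP ?V1" by (rule mat1_sub) (use q in simp)
  have m1b: "mat1 q \<subseteq> AP ?V1" by (rule mat1_sub) (use q in simp)
  have Nq1: "q + 1 \<le> ?N1" using card_mono[OF finite_AP[OF fin(1)] m1a] mat1_card by simp
  have T1: "turan_ex (p+2) (book_V p) (book_E p) = ?N1 - (q+1)"
  proof (rule turan_val)
    fix E assume E: "E \<subseteq> AP ?V1" "PP p ?V1 E = {}"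
    have "\<not> (2 * card (AP ?V1 - E) + 3 \<le> card ?V1)"
      using part1_lower[OF fin(1) E(1)] E(2) by auto
    then have "card (AP ?V1 - E) \<ge> q + 1" using q by simp
    then show "card E \<le> ?N1 - (q+1)" using cardE'[OF fin(1) E(1)] by linarith
  next
    show "AP ?V1 - mat1 (q+1) \<subseteq> AP ?V1" by blast
    show "PP p ?V1 (AP ?V1 - mat1 (q+1)) = {}" by (rule constr1_free) (use q in simp)
    show "card (AP ?V1 - mat1 (q+1)) = ?N1 - (q+1)"
      using card_Diff_subset[OF finite_subset[OF m1a finite_AP[OF fin(1)]] m1a] mat1_card by simp
  qed
  have P1: "min_copies (p+2) (?N1 - (q+1) + 1) (book_V p) (book_E p) = 3"
  proof (rule min_val[OF p2])
    fix E assume E: "E \<subseteq> AP ?V1" "card E = ?N1 - (q+1) + 1"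
    then have "card (AP ?V1 - E) = q" using cardE'[OF fin(1) E(1)] Nq1 by linarith
    then show "3 \<le> card (PP p ?V1 E)" using part1_lower[OF fin(1) E(1)] q by simp
  next
    show "AP ?V1 - mat1 q \<subseteq> AP ?V1" by blast
    show "card (AP ?V1 - mat1 q) = ?N1 - (q+1) + 1"
      using card_Diff_subset[OF finite_subset[OF m1b finite_AP[OF fin(1)]] m1b] mat1_card Nq1 by simp
    show "card (PP p ?V1 (AP ?V1 - mat1 q)) \<le> 3" by (rule constr1_min) (use q assms in simp_all)
  qed
  have m2a: "mat2 (q+2) \<subseteq> AP ?V2" by (rule mat2_sub) (use q in simp)
  have m2b: "mat2 (q+1) \<subseteq> AP ?V2" by (rule mat2_sub) (use q in simp)
  have Nq2: "q + 2 \<le> ?N2" using card_mono[OF finite_AP[OF fin(2)] m2a] mat2_card by simp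
  have T2: "turan_ex (p+3) (book_V p) (book_E p) = ?N2 - (q+2)"
  proof (rule turan_val)
    fix E assume E: "E \<subseteq> AP ?V2" "PP p ?V2 E = {}"
    have "\<not> (2 * card (AP ?V2 - E) + 2 \<le> card ?V2)"
    proof
      assume "2 * card (AP ?V2 - E) + 2 \<le> card ?V2"
      from part2_lower[OF fin(2) E(1) _ this] E(2) show False by simp
    qed
    then have "card (AP ?V2 - E) \<ge> q + 2" using q by simp
    then show "card E \<le> ?N2 - (q+2)" using cardE'[OF fin(2) E(1)] by linarith
  next
    show "AP ?V2 - mat2 (q+2) \<subseteq> AP ?V2" by blast
    show "PP p ?V2 (AP ?V2 - mat2 (q+2)) = {}" by (rule constr2_free) (use q in simp)
    show "card (AP ?V2 - mat2 (q+2)) = ?N2 - (q+2)"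
      using card_Diff_subset[OF finite_subset[OF m2a finite_AP[OF fin(2)]] m2a] mat2_card by simp
  qed
  have P2: "min_copies (p+3) (?N2 - (q+2) + 1) (book_V p) (book_E p) = 3 * (p+1)"
  proof (rule min_val[OF p2])
    fix E assume E: "E \<subseteq> AP ?V2" "card E = ?N2 - (q+2) + 1"
    then have "card (AP ?V2 - E) = q + 1" using cardE'[OF fin(2) E(1)] Nq2 by linarith
    then show "3 * (p+1) \<le> card (PP p ?V2 E)" using part2_lower[OF fin(2) E(1)] q by simp
  next
    show "AP ?V2 - mat2 (q+1) \<subseteq> AP ?V2" by blast
    show "card (AP ?V2 - mat2 (q+1)) = ?N2 - (q+2) + 1"
      using card_Diff_subset[OF finite_subset[OF m2b finite_AP[OF fin(2)]] m2b] mat2_card Nq2 by simp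
    show "card (PP p ?V2 (AP ?V2 - mat2 (q+1))) \<le> 3 * (p+1)" by (rule constr2_min) (use q in simp)
  qed
  show ?thesis using T1 T2 P1 P2 by simp
qed

end
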